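(* For $n\ge 3$, let $\mathscr{L}_n=\langle Q,\{a,b\},\delta\rangle$ with $Q=\{0,1,\dots,n-1\}$, where $\delta(i,b)=i+1$ for $0\le i\le n-2$ and $\delta(n-1,b)=0$; $\delta(i,a)=i+1$ for $0\le i\le n-4$, $\delta(n-3,a)=n-1$, $\delta(n-2,a)=0$ and $\delta(n-1,a)=0$. Then $sc(Syn(\mathscr{L}_n))=2^n-n$.
   Context: For a DFA $\mathscr{A}=\langle Q,\Sigma,\delta\rangle$ (total transition function, extended to words), $Syn(\mathscr{A})$ is the set of words $w\in\Sigma^*$ such that $\delta(q,w)=\delta(q',w)$ for all $q,q'\in Q$. The state complexity $sc(L)$ of a regular language $L$ is the number of states of the minimal (complete) DFA recognizing $L$. *)

theory Defs
  imports Main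
begin

datatype letter = a | b

definition delta_star :: "('q \<Rightarrow> 's \<Rightarrow> 'q) \<Rightarrow> 'q \<Rightarrow> 's list \<Rightarrow> 'q" where
  "delta_star \<delta> q w = foldl \<delta> q w"

definition Syn :: "'q set \<Rightarrow> ('q \<Rightarrow> 's \<Rightarrow> 'q) \<Rightarrow> 's list set" where
  "Syn Q \<delta> = {w. \<forall>q\<in>Q. \<forall>q'\<in>Q. delta_star \<delta> q w = delta_star \<delta> q' w}"

definition is_dfa :: "nat \<Rightarrow> nat \<Rightarrow> (nat \<Rightarrow> 's \<Rightarrow> nat) \<Rightarrow> nat set \<Rightarrow> bool" where
  "is_dfa m s t F \<longleftrightarrow> s < m \<and> (\<forall>q<m. \<forall>x. t q x < m) \<and> F \<subseteq> {0..<m}"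

definition dfa_lang :: "nat \<Rightarrow> (nat \<Rightarrow> 's \<Rightarrow> nat) \<Rightarrow> nat set \<Rightarrow> 's list set" where
  "dfa_lang s t F = {w. delta_star t s w \<in> F}"

text \<open>State complexity: number of states of a minimal complete DFA recognizing L
  (over the full alphabet given by the type 's).\<close>
definition sc :: "'s list set \<Rightarrow> nat" where
  "sc L = (LEAST m. \<exists>s t F. is_dfa m s t F \<and> dfa_lang s t F = L)"

definition deltaL :: "nat \<Rightarrow> nat \<Rightarrow> letter \<Rightarrow> nat" where
  "deltaL n i x = (case x of
      b \<Rightarrow> (if i \<le> n - 2 then i + 1 else 0)
    | a \<Rightarrow> (if i \<le> n - 4 \<and> n \<ge> 4 then i + 1
            else if i = n - 3 then n - 1
            else 0))"

end

theory Submission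
  imports Defs
begin


definition ds :: "nat \<Rightarrow> letter list \<Rightarrow> nat \<Rightarrow> nat" where
  "ds n w q = delta_star (deltaL n) q w"

lemma ds_Nil[simp]: "ds n [] q = q" by (simp add: ds_def delta_star_def)
lemma ds_Nil': "ds n [] = (\<lambda>q. q)" by (rule ext) simp
lemma ds_Cons[simp]: "ds n (x#w) q = ds n w (deltaL n q x)" by (simp add: ds_def delta_star_def)
lemma ds_append[simp]: "ds n (u@v) q = ds n v (ds n u q)" by (simp add: ds_def delta_star_def)
lemma ds_append_img: "ds n (u@v) ` T = ds n v ` (ds n u ` T)" by (auto simp: image_iff)

lemma deltaL_lt: "n \<ge> 3 \<Longrightarrow> i < n \<Longrightarrow> deltaL n i x < n"
  by (auto simp: deltaL_def split: letter.split)

lemma ds_lt: "n \<ge> 3 \<Longrightarrow> i < n \<Longrightarrow> ds n w i < n"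
  by (induction w arbitrary: i) (auto simp: deltaL_lt)

lemma deltaL_b: "n \<ge> 3 \<Longrightarrow> i < n \<Longrightarrow> deltaL n i b = (i+1) mod n"
proof (cases "i \<le> n - 2")
  case False
  assume "n \<ge> 3" "i < n"
  then have "Suc i = n" using False by auto
  then show ?thesis using False by (simp add: deltaL_def)
qed (auto simp: deltaL_def)

lemma rot: "n \<ge> 3 \<Longrightarrow> i < n \<Longrightarrow> ds n (replicate r b) i = (i + r) mod n"
proof (induction r arbitrary: i)
  case 0 then show ?case by simp
next
  case (Suc r)
  have "ds n (replicate (Suc r) b) i = ds n (replicate r b) ((i+1) mod n)"
    using Suc.prems by (simp add: deltaL_b)
  also have "\<dots> = ((i+1) mod n + r) mod n" using Suc by simp
  also have "\<dots> = (i + Suc r) mod n" by (simp add: mod_add_left_eq)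
  finally show ?case .
qed

lemma a_n2: "n \<ge> 3 \<Longrightarrow> deltaL n (n-2) a = 0" by (auto simp: deltaL_def)
lemma a_n1: "n \<ge> 3 \<Longrightarrow> deltaL n (n-1) a = 0" by (auto simp: deltaL_def)
lemma a_n3: "n \<ge> 3 \<Longrightarrow> deltaL n (n-3) a = n-1" by (auto simp: deltaL_def)
lemma a_low: "i + 4 \<le> n \<Longrightarrow> deltaL n i a = i+1" by (auto simp: deltaL_def)

lemma a_img: assumes "n \<ge> 3" shows "(\<lambda>i. deltaL n i a) ` ({0..<n} - {n-2}) = {0..<n} - {n-2}"
  and "(\<lambda>i. deltaL n i a) ` {0..<n} = {0..<n} - {n-2}"
proof -
  have sub: "(\<lambda>i. deltaL n i a) ` {0..<n} \<subseteq> {0..<n} - {n-2}"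
    using assms by (auto simp: deltaL_def)
  have sup: "{0..<n} - {n-2} \<subseteq> (\<lambda>i. deltaL n i a) ` ({0..<n} - {n-2})"
  proof
    fix z assume z: "z \<in> {0..<n} - {n-2}"
    show "z \<in> (\<lambda>i. deltaL n i a) ` ({0..<n} - {n-2})"
    proof (cases "z = 0")
      case True then show ?thesis using assms a_n1[OF assms]
        by (auto intro!: image_eqI[where x="n-1"])
    next
      case False
      show ?thesis
      proof (cases "z = n - 1")
        case True then show ?thesis using assms a_n3[OF assms]
          by (auto intro!: image_eqI[where x="n-3"])
      next
        case False2: False
        then have "z - 1 + 4 \<le> n" using z \<open>z \<noteq> 0\<close> by auto
        then show ?thesis using z \<open>z \<noteq> 0\<close> a_low[of "z-1" n]
          by (auto intro!: image_eqI[where x="z-1"])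
      qed
    qed
  qed
  show "(\<lambda>i. deltaL n i a) ` ({0..<n} - {n-2}) = {0..<n} - {n-2}"
    using sub sup by blast
  show "(\<lambda>i. deltaL n i a) ` {0..<n} = {0..<n} - {n-2}"
    using sub sup by blast
qed

lemma apow_img: assumes "n \<ge> 3"
  shows "ds n (replicate (Suc k) a) ` {0..<n} = {0..<n} - {n-2}"
proof (induction k)
  case 0 then show ?case using a_img(2)[OF assms] by (simp add: image_iff)
next
  case (Suc k)
  have "replicate (Suc (Suc k)) a = replicate (Suc k) a @ [a]"
    by (simp add: replicate_append_same)
  then have "ds n (replicate (Suc (Suc k)) a) ` {0..<n}
     = (\<lambda>i. deltaL n i a) ` (ds n (replicate (Suc k) a) ` {0..<n})"
    by (simp only: ds_append_img) (auto simp: image_iff)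
  then show ?case using Suc a_img(1)[OF assms] by simp
qed

lemma apow0: "j + 3 \<le> n \<Longrightarrow> ds n (replicate j a) 0 = j"
proof (induction j)
  case 0 then show ?case by simp
next
  case (Suc j)
  have "replicate (Suc j) a = replicate j a @ [a]"
    by (simp add: replicate_append_same)
  then show ?case using Suc a_low[of j n] by simp
qed

lemma apow_merge: assumes "n \<ge> 3"
  shows "ds n (replicate (n-1) a) (n-1) = n-1" "ds n (replicate (n-1) a) (n-2) = n-1"
proof -
  have e1: "replicate (n-1) a = a # (replicate (n-3) a @ [a])"
  proof -
    have "n - 1 = Suc (Suc (n-3))" using assms by simp
    then show ?thesis by (simp add: replicate_append_same)
  qed
  have "ds n (replicate (n-3) a @ [a]) 0 = n - 1"
    using apow0[of "n-3" n] assms a_n3[OF assms] by simp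
  then show "ds n (replicate (n-1) a) (n-1) = n-1" "ds n (replicate (n-1) a) (n-2) = n-1"
    using e1 a_n1[OF assms] a_n2[OF assms] by simp_all
qed



definition Dj :: "nat \<Rightarrow> nat \<Rightarrow> nat" where
  "Dj j i = (if i + 1 = j then j else if i = j then j+1 else i)"

definition W :: "nat \<Rightarrow> nat \<Rightarrow> letter list" where
  "W n j = replicate (n-2-j) b @ a # replicate (j+1) b"

lemma Wj: assumes "n \<ge> 3" "1 \<le> j" "j \<le> n-2" "i < n"
  shows "ds n (W n j) i = Dj j i"
proof -
  define v where "v = (i + (n-2-j)) mod n"
  have vlt: "v < n" using assms by (simp add: v_def)
  have e0: "ds n (W n j) i = ds n (replicate (j+1) b) (deltaL n (ds n (replicate (n-2-j) b) i) a)"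
    by (simp add: W_def del: replicate_Suc)
  have e: "ds n (W n j) i = (deltaL n v a + (j+1)) mod n"
    using e0 assms vlt by (simp add: rot v_def deltaL_lt del: replicate_Suc)
  consider "i + 2 \<le> j" | "i + 1 = j" | "i = j" | "i = j+1" | "j + 2 \<le> i" by linarith
  then show ?thesis
  proof cases
    case 1
    then have "v = i + (n-2-j)" using assms by (simp add: v_def)
    moreover have "v + 4 \<le> n" using 1 assms calculation by linarith
    ultimately have "deltaL n v a + (j+1) = i + n" using a_low[of v n] 1 assms by simp
    then show ?thesis using e 1 assms by (simp add: Dj_def)
  next
    case 2
    then have "v = n - 3" using assms by (simp add: v_def)
    then have eq: "deltaL n v a + (j+1) = j + n" using a_n3[of n] assms 2 by simp
    have h: "(deltaL n v a + (j+1)) mod n = j" using assms by (simp only: eq) simp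
    show ?thesis using e h 2 by (simp add: Dj_def)
  next
    case 3
    then have "v = n - 2" using assms by (simp add: v_def)
    then show ?thesis using e 3 assms a_n2[of n] by (simp add: Dj_def)
  next
    case 4
    then have "v = n - 1" using assms by (simp add: v_def)
    then show ?thesis using e 4 assms a_n1[of n] by (simp add: Dj_def)
  next
    case 5
    have eq: "i + (n-2-j) = (i - j - 2) + n" using 5 assms by simp
    have "v = (i - j - 2 + n) mod n" by (simp only: v_def eq)
    also have "\<dots> = i - j - 2" using assms 5 by (subst mod_add_self2) simp
    finally have "v = i - j - 2" .
    moreover have "v + 4 \<le> n" using 5 assms calculation by linarith
    ultimately have "deltaL n v a + (j+1) = i" using a_low[of v n] 5 assms by simp
    then show ?thesis using e 5 assms by (simp add: Dj_def)
  qed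
qed

lemma Wj_img: assumes "n \<ge> 3" "1 \<le> j" "j \<le> n-2" "T \<subseteq> {0..<n}"
  shows "ds n (W n j) ` T = Dj j ` T"
  using assms Wj by (intro image_cong) auto

lemma gap: assumes n3: "n \<ge> 3"
  shows "\<forall>t T. T \<subseteq> {1..<n} \<longrightarrow> t \<in> T \<longrightarrow> t + k \<in> T \<longrightarrow> 1 \<le> k
     \<longrightarrow> (\<forall>i. t < i \<and> i < t + k \<longrightarrow> i \<notin> T)
     \<longrightarrow> (\<exists>v. card (ds n v ` T) < card T \<and> ds n v 0 \<notin> ds n v ` T)"
proof (induction k)
  case 0 then show ?case by simp
next
  case (Suc k)
  show ?case
  proof (intro allI impI)
    fix t T assume T: "T \<subseteq> {1..<n}" and t: "t \<in> T" and tk: "t + Suc k \<in> T" and "1 \<le> Suc k"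
      and g: "\<forall>i. t < i \<and> i < t + Suc k \<longrightarrow> i \<notin> T"
    have fin: "finite T" using T finite_subset by blast
    have TQ: "T \<subseteq> {0..<n}" using T by auto
    show "\<exists>v. card (ds n v ` T) < card T \<and> ds n v 0 \<notin> ds n v ` T"
    proof (cases "k = 0")
      case True
      have t1: "1 \<le> t" "t \<le> n - 2" using T t tk True by auto
      have img: "ds n (W n t) ` T = Dj t ` T" by (rule Wj_img[OF n3 t1 TQ])
      have "\<not> inj_on (Dj t) T"
        using t tk True unfolding inj_on_def Dj_def by (auto intro!: bexI[where x=t] bexI[where x="t+1"])
      then have "card (Dj t ` T) \<noteq> card T" using inj_on_iff_eq_card[OF fin] by blast
      then have c: "card (Dj t ` T) < card T" using card_image_le[OF fin, of "Dj t"] by linarith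
      have d0: "ds n (W n t) 0 = Dj t 0" using Wj[OF n3 t1] n3 by simp
      have "Dj t 0 \<notin> Dj t ` T"
        using T t1 by (auto simp: Dj_def split: if_splits)
      then show ?thesis using c img d0 by (intro exI[where x="W n t"]) simp
    next
      case False
      have t1: "1 \<le> t+1" "t+1 \<le> n - 2" using T t tk False by auto
      have nt: "t + 1 \<notin> T" using g False by auto
      define T' where "T' = Dj (t+1) ` T"
      have img: "ds n (W n (t+1)) ` T = T'" unfolding T'_def by (rule Wj_img[OF n3 t1 TQ])
      have inj: "inj_on (Dj (t+1)) T"
        using nt unfolding inj_on_def Dj_def by auto
      have cT': "card T' = card T" unfolding T'_def using card_image[OF inj] .
      have T'eq: "T' = insert (t+1) (T - {t})"
        unfolding T'_def Dj_def using t nt by (auto simp: image_iff split: if_splits) 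
      have T'sub: "T' \<subseteq> {1..<n}" using T'eq T t1 by auto
      have "(t+1) + k \<in> T'" using T'eq tk False by auto
      moreover have "\<forall>i. t + 1 < i \<and> i < t + 1 + k \<longrightarrow> i \<notin> T'" using T'eq g by auto
      moreover have "t + 1 \<in> T'" using T'eq by auto
      ultimately obtain v where v: "card (ds n v ` T') < card T'" "ds n v 0 \<notin> ds n v ` T'"
        using Suc.IH T'sub False by (meson less_one not_le)
      have "1 \<le> t" using T t by auto
      then have d0: "ds n (W n (t+1)) 0 = 0" using Wj[OF n3 t1] n3 t1 by (simp add: Dj_def)
      have "ds n (W n (t+1) @ v) ` T = ds n v ` T'" by (simp only: ds_append_img img)
      then show ?thesis
        using v cT' d0 by (intro exI[where x="W n (t+1) @ v"]) simp
    qed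
  qed
qed

lemma M0: assumes n3: "n \<ge> 3" and T: "T \<subseteq> {1..<n}" and c: "2 \<le> card T"
  shows "\<exists>v. card (ds n v ` T) < card T \<and> ds n v 0 \<notin> ds n v ` T"
proof -
  have fin: "finite T" using T finite_subset by blast
  have ne: "T \<noteq> {}" using c by auto
  define t where "t = Min T"
  have tT: "t \<in> T" using fin ne t_def by simp
  have ne2: "T - {t} \<noteq> {}"
  proof
    assume "T - {t} = {}" then have "T = {t}" using tT by auto
    then show False using c by simp
  qed
  define s where "s = Min (T - {t})"
  have sT: "s \<in> T - {t}" using Min_in[of "T - {t}"] fin ne2 s_def by auto
  have "t \<le> s" using sT t_def fin by simp
  then have ts: "t < s" using sT by auto
  have g: "\<forall>i. t < i \<and> i < t + (s - t) \<longrightarrow> i \<notin> T"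
  proof (intro allI impI)
    fix i assume i: "t < i \<and> i < t + (s - t)"
    show "i \<notin> T"
    proof
      assume "i \<in> T"
      then have "i \<in> T - {t}" using i by auto
      then have "s \<le> i" using s_def fin by simp
      then show False using i ts by linarith
    qed
  qed
  show ?thesis using gap[OF n3, rule_format, of T t "s - t"] T tT sT ts g by auto
qed

lemma rot_inj: assumes "n \<ge> 3" shows "inj_on (ds n (replicate r b)) {0..<n}"
proof (induction r)
  case 0 then show ?case by (simp add: ds_Nil')
next
  case (Suc r)
  have "ds n (replicate (Suc r) b) = ds n (replicate r b) \<circ> (\<lambda>q. deltaL n q b)"
    by (rule ext) simp
  moreover have "inj_on (\<lambda>q. deltaL n q b) {0..<n}"
    using assms unfolding inj_on_def by (auto simp: deltaL_def split: if_splits)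
  moreover have "(\<lambda>q. deltaL n q b) ` {0..<n} \<subseteq> {0..<n}" using assms deltaL_lt by auto
  ultimately show ?case using Suc comp_inj_on inj_on_subset by metis
qed

lemma K: assumes n3: "n \<ge> 3"
  shows "T \<subseteq> {0..<n} \<Longrightarrow> x < n \<Longrightarrow> x \<notin> T \<Longrightarrow> T \<noteq> {} \<Longrightarrow>
     \<exists>w. card (ds n w ` T) = 1 \<and> ds n w x \<notin> ds n w ` T"
proof (induction "card T" arbitrary: T x rule: less_induct)
  case less
  have fin: "finite T" using less.prems finite_subset by blast
  have c1: "card T \<ge> 1" using fin less.prems by (simp add: Suc_leI card_gt_0_iff)
  show ?case
  proof (cases "card T = 1")
    case True then show ?thesis using less.prems by (intro exI[where x="[]"]) (simp add: ds_Nil')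
  next
    case False
    then have c2: "card T \<ge> 2" using c1 by linarith
    define r where "r = n - x"
    define \<rho> where "\<rho> = ds n (replicate r b)"
    have rx: "\<rho> x = 0" using rot[OF n3 less.prems(2)] less.prems(2) by (simp add: \<rho>_def r_def)
    have inj: "inj_on \<rho> {0..<n}" unfolding \<rho>_def by (rule rot_inj[OF n3])
    define T1 where "T1 = \<rho> ` T"
    have cT1: "card T1 = card T" unfolding T1_def
      using inj_on_subset[OF inj less.prems(1)] card_image by blast
    have "0 \<notin> T1"
    proof
      assume "0 \<in> T1"
      then obtain y where "y \<in> T" "\<rho> y = 0" unfolding T1_def by auto
      moreover have "y < n" using \<open>y \<in> T\<close> less.prems(1) by auto
      ultimately have "y = x" using inj_onD[OF inj, of y x] rx less.prems(2) by simp
      then show False using \<open>y \<in> T\<close> less.prems by auto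
    qed
    moreover have "T1 \<subseteq> {0..<n}" unfolding T1_def \<rho>_def using less.prems(1) ds_lt[OF n3] by auto
    ultimately have T1s: "T1 \<subseteq> {1..<n}"
      by (metis atLeastLessThan_iff less_one not_le subset_iff)
    obtain v where v: "card (ds n v ` T1) < card T1" "ds n v 0 \<notin> ds n v ` T1"
      using M0[OF n3 T1s] cT1 c2 by auto
    define T2 where "T2 = ds n v ` T1"
    have T2s: "T2 \<subseteq> {0..<n}" unfolding T2_def using T1s ds_lt[OF n3] by auto
    have T2ne: "T2 \<noteq> {}" unfolding T2_def T1_def using less.prems by auto
    have x2: "ds n v 0 < n" using ds_lt[OF n3] n3 by simp
    have cT2: "card T2 < card T" using v(1) cT1 unfolding T2_def by simp
    have x2T: "ds n v 0 \<notin> T2" using v(2) unfolding T2_def .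
    obtain w where w: "card (ds n w ` T2) = 1" "ds n w (ds n v 0) \<notin> ds n w ` T2"
      using less.hyps[OF cT2 T2s x2 x2T T2ne] by blast
    have "ds n (replicate r b @ v @ w) ` T = ds n w ` T2"
      unfolding T2_def T1_def \<rho>_def by (simp only: ds_append_img)
    moreover have "ds n (replicate r b @ v @ w) x = ds n w (ds n v 0)"
      using rx unfolding \<rho>_def by simp
    ultimately show ?thesis using w by (intro exI[where x="replicate r b @ v @ w"]) simp
  qed
qed



definition acc :: "nat \<Rightarrow> nat set \<Rightarrow> letter list \<Rightarrow> bool" where
  "acc n S z = (\<forall>p\<in>S. \<forall>q\<in>S. ds n z p = ds n z q)"

lemma Syn_iff: "w \<in> Syn {0..<n} (deltaL n) \<longleftrightarrow> (\<forall>p\<in>{0..<n}. \<forall>q\<in>{0..<n}. ds n w p = ds n w q)"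
  by (simp add: Syn_def ds_def)

lemma Syn_append: "(u@z \<in> Syn {0..<n} (deltaL n)) \<longleftrightarrow> acc n (ds n u ` {0..<n}) z"
  by (auto simp: Syn_iff acc_def)

lemma closure_all: assumes "S \<subseteq> {0..<(n::nat)}" "y0 \<in> S" "\<forall>y\<in>S. (y + n - 1) mod n \<in> S"
  shows "S = {0..<n}"
proof -
  have down: "y \<in> S \<longrightarrow> (\<forall>k\<le>y. k \<in> S)" for y
  proof (induction y)
    case 0 then show ?case by simp
  next
    case (Suc y)
    show ?case
    proof
      assume sy: "Suc y \<in> S"
      then have "Suc y < n" using assms(1) by auto
      then have "(Suc y + n - 1) mod n = y" by simp
      then have "y \<in> S" using assms(3) sy by metis
      then show "\<forall>k\<le>Suc y. k \<in> S" using Suc sy le_Suc_eq by auto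
    qed
  qed
  have "0 \<in> S" using down assms(2) by blast
  have n1: "n \<ge> 1" using assms by auto
  then have "(0 + n - 1) mod n = n - 1" by simp
  then have "n - 1 \<in> S" using assms(3) \<open>0 \<in> S\<close> by metis
  then have "\<forall>k\<le>n-1. k \<in> S" using down by blast
  then have "{0..<n} \<subseteq> S" using n1 by auto
  then show ?thesis using assms(1) by blast
qed

lemma reach: assumes n3: "n \<ge> 3"
  shows "S \<subseteq> {0..<n} \<Longrightarrow> 2 \<le> card S \<Longrightarrow> \<exists>w. ds n w ` {0..<n} = S"
proof (induction "n - card S" arbitrary: S rule: less_induct)
  case less
  show ?case
  proof (cases "S = {0..<n}")
    case True then show ?thesis by (intro exI[where x="[]"]) (simp add: ds_Nil')
  next
    case False
    then have "S \<subset> {0..<n}" using less.prems(1) by blast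
    then have cS: "card S < n" using psubset_card_mono[of "{0..<n}" S] by simp
    have Sne: "S \<noteq> {}" using less.prems(2) by auto
    then obtain y0 where "y0 \<in> S" by blast
    then obtain y where y: "y \<in> S" "(y + n - 1) mod n \<notin> S"
      using closure_all[OF less.prems(1)] False by blast
    have yn: "y < n" using y less.prems(1) by auto
    define \<rho> where "\<rho> = ds n (replicate (y+1) b)"
    define u where "u = replicate (n-1) a @ replicate (y+1) b"
    define f where "f = ds n u"
    have "Suc (n-2) = n - 1" using n3 by simp
    then have Q2: "ds n (replicate (n-1) a) ` {0..<n} = {0..<n} - {n-2}"
      using apow_img[OF n3, of "n-2"] by simp
    have fimg: "f ` {0..<n} = \<rho> ` ({0..<n} - {n-2})"
      unfolding f_def u_def \<rho>_def by (simp only: ds_append_img Q2)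
    have rinj: "inj_on \<rho> {0..<n}" unfolding \<rho>_def by (rule rot_inj[OF n3])
    have rsub: "\<rho> ` {0..<n} \<subseteq> {0..<n}" unfolding \<rho>_def using ds_lt[OF n3] by (auto simp del: replicate_Suc)
    have rsurj: "\<rho> ` {0..<n} = {0..<n}" using endo_inj_surj[OF _ rsub rinj] by simp
    have "n - 2 + (y + 1) = y + n - 1" using n3 by simp
    then have rn2: "\<rho> (n-2) = (y + n - 1) mod n" unfolding \<rho>_def using rot[OF n3, of "n-2" "y+1"] n3
      by (simp del: replicate_Suc)
    have "n - 1 + (y + 1) = y + n" using n3 by simp
    then have rn1: "\<rho> (n-1) = y" unfolding \<rho>_def using rot[OF n3, of "n-1" "y+1"] n3 yn
      by (simp del: replicate_Suc)
    have SsubF: "S \<subseteq> f ` {0..<n}"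
    proof
      fix s assume s: "s \<in> S"
      then have "s \<in> \<rho> ` {0..<n}" using rsurj less.prems(1) by auto
      then obtain z where z: "z < n" "\<rho> z = s" by auto
      have "z \<noteq> n-2" using z rn2 y s by auto
      then show "s \<in> f ` {0..<n}" using fimg z by auto
    qed
    have fn1: "f (n-1) = y" "f (n-2) = y"
      unfolding f_def u_def using apow_merge[OF n3] rn1 unfolding \<rho>_def by (simp_all del: replicate_Suc)
    define P where "P = {i \<in> {0..<n}. f i \<in> S}"
    have fP: "f ` P = S" using SsubF unfolding P_def by auto
    have finP: "finite P" unfolding P_def by simp
    have "\<not> inj_on f P"
    proof
      assume "inj_on f P"
      moreover have "n-1 \<in> P" "n-2 \<in> P" using fn1 y n3 unfolding P_def by auto
      ultimately have "n-1 = n-2" using fn1 inj_onD by metis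
      then show False using n3 by simp
    qed
    then have "card (f ` P) \<noteq> card P" using inj_on_iff_eq_card[OF finP] by blast
    then have cP: "card S < card P" using card_image_le[OF finP, of f] unfolding fP by linarith
    have PQ: "P \<subseteq> {0..<n}" unfolding P_def by auto
    have "card P \<le> n" using card_mono[OF _ PQ] by simp
    then have lt: "n - card P < n - card S" using cP cS by linarith
    have "2 \<le> card P" using cP less.prems(2) by linarith
    then obtain w where w: "ds n w ` {0..<n} = P"
      using less.hyps[OF lt PQ] by blast
    have "ds n (w @ u) ` {0..<n} = S" using fP unfolding f_def by (simp only: ds_append_img w)
    then show ?thesis by blast
  qed
qed

definition X :: "nat \<Rightarrow> nat set set" where
  "X n = Pow {0..<n} - (\<lambda>i. {i}) ` {0..<n}"

lemma finX: "finite (X n)" unfolding X_def by simp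

lemma cardX: "card (X n) = 2^n - n"
proof -
  have inj: "inj_on (\<lambda>i::nat. {i}) {0..<n}" unfolding inj_on_def by auto
  have "card ((\<lambda>i::nat. {i}) ` {0..<n}) = n" using card_image[OF inj] by simp
  moreover have "(\<lambda>i::nat. {i}) ` {0..<n} \<subseteq> Pow {0..<n}" by auto
  ultimately show ?thesis unfolding X_def
    by (simp add: card_Diff_subset card_Pow)
qed

lemma X_iff: "U \<in> X n \<longleftrightarrow> U \<subseteq> {0..<n} \<and> (U = {} \<or> 2 \<le> card U)"
proof
  assume U: "U \<in> X n"
  then have sub: "U \<subseteq> {0..<n}" unfolding X_def by auto
  have "U = {} \<or> 2 \<le> card U"
  proof (cases "U = {}")
    case ne: False
    have fin: "finite U" using sub finite_subset by blast
    have "card U \<noteq> 0" using fin ne by simp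
    moreover have "card U \<noteq> 1"
    proof
      assume "card U = 1"
      then obtain x where "U = {x}" by (rule card_1_singletonE)
      then show False using U unfolding X_def by auto
    qed
    ultimately show ?thesis by linarith
  qed simp
  then show "U \<subseteq> {0..<n} \<and> (U = {} \<or> 2 \<le> card U)" using sub by blast
next
  assume "U \<subseteq> {0..<n} \<and> (U = {} \<or> 2 \<le> card U)"
  then show "U \<in> X n" unfolding X_def by auto
qed

definition fx :: "nat set \<Rightarrow> nat set" where
  "fx U = (if card U \<le> 1 then {} else U)"

definition Tr :: "nat \<Rightarrow> nat set \<Rightarrow> letter \<Rightarrow> nat set" where
  "Tr n U x = fx ((\<lambda>i. deltaL n i x) ` U)"

lemma run_fx: "finite U \<Longrightarrow> foldl (Tr n) (fx U) w = fx (ds n w ` U)"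
proof (induction w arbitrary: U)
  case Nil then show ?case by (simp add: ds_Nil')
next
  case (Cons x w)
  have step: "Tr n (fx U) x = fx ((\<lambda>i. deltaL n i x) ` U)"
  proof (cases "card U \<le> 1")
    case True
    have "card ((\<lambda>i. deltaL n i x) ` U) \<le> 1" using card_image_le[OF Cons.prems] True le_trans by blast
    then show ?thesis using True by (simp add: fx_def Tr_def)
  qed (simp add: fx_def Tr_def)
  have img: "ds n (x#w) ` U = ds n w ` ((\<lambda>i. deltaL n i x) ` U)" by (auto simp: image_iff)
  show ?case using Cons.IH[of "(\<lambda>i. deltaL n i x) ` U"] Cons.prems step img by simp
qed

lemma TrX: "n \<ge> 3 \<Longrightarrow> U \<in> X n \<Longrightarrow> Tr n U x \<in> X n"
  unfolding Tr_def fx_def X_iff using deltaL_lt by auto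

lemma foldlX: "n \<ge> 3 \<Longrightarrow> U \<in> X n \<Longrightarrow> foldl (Tr n) U w \<in> X n"
  by (induction w arbitrary: U) (auto simp: TrX)

lemma upper: assumes n3: "n \<ge> 3"
  shows "\<exists>s t F. is_dfa (card (X n)) s t F \<and> dfa_lang s t F = Syn {0..<n} (deltaL n)"
proof -
  let ?m = "card (X n)"
  obtain h where h: "bij_betw h (X n) {0..<?m}" using ex_bij_betw_finite_nat[OF finX] by blast
  define g where "g = inv_into (X n) h"
  have g: "bij_betw g {0..<?m} (X n)" unfolding g_def by (rule bij_betw_inv_into[OF h])
  define t where "t = (\<lambda>q x. h (Tr n (g q) x))"
  define s where "s = h {0..<n}"
  define F where "F = {h {}}"
  have QX: "{0..<n} \<in> X n" and EX: "{} \<in> X n" using X_iff n3 by auto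
  have hX: "h U < ?m" if "U \<in> X n" for U using bij_betw_apply[OF h that] by simp
  have gX: "g q \<in> X n" if "q < ?m" for q using bij_betw_apply[OF g] that by simp
  have "\<forall>q<?m. \<forall>x. t q x < ?m"
  proof (intro allI impI)
    fix q x assume "q < ?m"
    then show "t q x < ?m" unfolding t_def using hX TrX[OF n3 gX] by blast
  qed
  moreover have "s < ?m" unfolding s_def using hX QX by blast
  moreover have "F \<subseteq> {0..<?m}" unfolding F_def using hX EX by simp
  ultimately have dfa: "is_dfa ?m s t F" unfolding is_dfa_def by blast
  have run: "\<forall>U\<in>X n. delta_star t (h U) w = h (foldl (Tr n) U w)" for w
  proof (induction w)
    case Nil then show ?case by (simp add: delta_star_def)
  next
    case (Cons x w)
    show ?case
    proof
      fix U assume U: "U \<in> X n"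
      have "t (h U) x = h (Tr n U x)" unfolding t_def g_def using bij_betw_inv_into_left[OF h U] by simp
      moreover have "Tr n U x \<in> X n" using TrX[OF n3 U] .
      ultimately show "delta_star t (h U) (x # w) = h (foldl (Tr n) U (x # w))"
        using Cons by (simp add: delta_star_def)
    qed
  qed
  have injh: "inj_on h (X n)" using h bij_betw_def by blast
  have "w \<in> dfa_lang s t F \<longleftrightarrow> w \<in> Syn {0..<n} (deltaL n)" for w
  proof -
    have fQ: "fx {0..<n} = {0..<n}" using n3 by (simp add: fx_def)
    have "w \<in> dfa_lang s t F \<longleftrightarrow> h (foldl (Tr n) {0..<n} w) = h {}"
      unfolding dfa_lang_def s_def F_def using run QX by simp
    also have "\<dots> \<longleftrightarrow> foldl (Tr n) {0..<n} w = {}"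
      using inj_on_eq_iff[OF injh foldlX[OF n3 QX] EX] .
    also have "\<dots> \<longleftrightarrow> fx (ds n w ` {0..<n}) = {}" using run_fx[of "{0..<n}" n w] fQ by simp
    also have "\<dots> \<longleftrightarrow> card (ds n w ` {0..<n}) \<le> 1"
    proof -
      have "ds n w ` {0..<n} \<noteq> {}" using n3 by simp
      then show ?thesis by (simp add: fx_def)
    qed
    also have "\<dots> \<longleftrightarrow> w \<in> Syn {0..<n} (deltaL n)"
      using card_le_Suc0_iff_eq[of "ds n w ` {0..<n}"] by (simp add: Syn_iff)
    finally show ?thesis .
  qed
  then have "dfa_lang s t F = Syn {0..<n} (deltaL n)" by (rule set_eqI)
  then show ?thesis using dfa by blast
qed

lemma sync: assumes n3: "n \<ge> 3" shows "\<exists>w. \<forall>p\<in>{0..<n}. \<forall>q\<in>{0..<n}. ds n w p = ds n w q"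
proof -
  have "0 \<in> {0..<n} - {n-2}" using n3 by auto
  then have "{0..<n} - {n-2} \<noteq> {}" by blast
  then obtain w where w: "card (ds n w ` ({0..<n} - {n-2})) = 1"
    using K[OF n3, of "{0..<n} - {n-2}" "n-2"] n3 by auto
  then obtain c where c: "ds n w ` ({0..<n} - {n-2}) = {c}" by (rule card_1_singletonE)
  have "\<forall>p\<in>{0..<n}. ds n (a#w) p = c"
  proof
    fix p assume "p \<in> {0..<n}"
    then have "deltaL n p a \<in> {0..<n} - {n-2}" using a_img(2)[OF n3] by blast
    then show "ds n (a#w) p = c" using c by auto
  qed
  then show ?thesis by metis
qed

lemma distK: assumes n3: "n \<ge> 3" and S: "S \<subseteq> {0..<n}" "2 \<le> card S" and T: "T \<subseteq> {0..<n}"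
  and x: "x \<in> S" "x \<notin> T"
  shows "\<exists>z. \<not> acc n S z \<and> acc n T z"
proof -
  have finS: "finite S" using S finite_subset by blast
  obtain y where y: "y \<in> S" "y \<noteq> x"
  proof -
    have "\<not> (\<forall>a1\<in>S. \<forall>a2\<in>S. a1 = a2)" using card_le_Suc0_iff_eq[OF finS] S by simp
    then show ?thesis using that by metis
  qed
  have xn: "x < n" using x S by auto
  have "insert y T \<subseteq> {0..<n}" using y S T by auto
  then obtain z where z: "card (ds n z ` insert y T) = 1" "ds n z x \<notin> ds n z ` insert y T"
    using K[OF n3, of "insert y T" x] xn x y by auto
  obtain c where c: "ds n z ` insert y T = {c}" using z(1) by (rule card_1_singletonE)
  have cc: "ds n z p = c" if "p \<in> insert y T" for p using c that by blast
  have "acc n T z" unfolding acc_def using cc by simp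
  moreover have "\<not> acc n S z" unfolding acc_def using cc[of y] z(2) c x y by auto
  ultimately show ?thesis by blast
qed

lemma dist: assumes n3: "n \<ge> 3" and U: "U \<in> X n" and V: "V \<in> X n" and ne: "U \<noteq> V"
  shows "\<exists>z. acc n U z \<noteq> acc n V z"
proof -
  have two: "\<exists>p\<in>W. \<exists>q\<in>W. p \<noteq> q" if "W \<subseteq> {0..<n}" "2 \<le> card W" for W
  proof -
    have "finite W" using that finite_subset by blast
    then show ?thesis using card_le_Suc0_iff_eq[of W] that by auto
  qed
  show ?thesis
  proof (cases "U = {}")
    case True
    then have "V \<subseteq> {0..<n}" "2 \<le> card V" using V ne X_iff by auto
    then obtain p q where "p \<in> V" "q \<in> V" "p \<noteq> q" using two by blast
    then have "\<not> acc n V []" "acc n U []" using True by (auto simp: acc_def)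
    then show ?thesis by blast
  next
    case Une: False
    show ?thesis
    proof (cases "V = {}")
      case True
      then have "U \<subseteq> {0..<n}" "2 \<le> card U" using U Une X_iff by auto
      then obtain p q where "p \<in> U" "q \<in> U" "p \<noteq> q" using two by blast
      then have "\<not> acc n U []" "acc n V []" using True by (auto simp: acc_def)
      then show ?thesis by blast
    next
      case Vne: False
      have U2: "U \<subseteq> {0..<n}" "2 \<le> card U" using U Une X_iff by auto
      have V2: "V \<subseteq> {0..<n}" "2 \<le> card V" using V Vne X_iff by auto
      show ?thesis
      proof (cases "\<exists>x. x \<in> U \<and> x \<notin> V")
        case True
        then obtain x where "x \<in> U" "x \<notin> V" by blast
        then show ?thesis using distK[OF n3 U2 V2(1)] by blast
      next
        case False
        then have "\<exists>x. x \<in> V \<and> x \<notin> U" using ne by blast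
        then obtain x where "x \<in> V" "x \<notin> U" by blast
        then show ?thesis using distK[OF n3 V2 U2(1)] by metis
      qed
    qed
  qed
qed

lemma dstar_lt: "is_dfa m s t F \<Longrightarrow> q < m \<Longrightarrow> delta_star t q w < m"
proof (induction w arbitrary: q)
  case Nil then show ?case by (simp add: delta_star_def)
next
  case (Cons x w)
  have "t q x < m" using Cons.prems unfolding is_dfa_def by blast
  then have "delta_star t (t q x) w < m" using Cons.IH Cons.prems(1) by blast
  then show ?case by (simp add: delta_star_def)
qed

lemma lower: assumes n3: "n \<ge> 3" and dfa: "is_dfa m s t F"
  and L: "dfa_lang s t F = Syn {0..<n} (deltaL n)"
  shows "card (X n) \<le> m"
proof -
  have word: "\<forall>U\<in>X n. \<exists>u. \<forall>z. (u@z \<in> Syn {0..<n} (deltaL n)) \<longleftrightarrow> acc n U z"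
  proof
    fix U assume U: "U \<in> X n"
    show "\<exists>u. \<forall>z. (u@z \<in> Syn {0..<n} (deltaL n)) \<longleftrightarrow> acc n U z"
    proof (cases "U = {}")
      case True
      obtain w where w: "\<forall>p\<in>{0..<n}. \<forall>q\<in>{0..<n}. ds n w p = ds n w q" using sync[OF n3] by blast
      have "\<forall>z. acc n (ds n w ` {0..<n}) z" unfolding acc_def
      proof (intro allI ballI)
        fix z p q assume "p \<in> ds n w ` {0..<n}" "q \<in> ds n w ` {0..<n}"
        then obtain p' q' where "p' \<in> {0..<n}" "q' \<in> {0..<n}" "p = ds n w p'" "q = ds n w q'"
          by blast
        then show "ds n z p = ds n z q" using w by metis
      qed
      moreover have "\<forall>z. acc n U z" using True by (simp add: acc_def)
      ultimately have "\<forall>z. (w@z \<in> Syn {0..<n} (deltaL n)) \<longleftrightarrow> acc n U z"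
        by (simp add: Syn_append)
      then show ?thesis by blast
    next
      case False
      then have "U \<subseteq> {0..<n}" "2 \<le> card U" using U unfolding X_iff by blast+
      then obtain w where w: "ds n w ` {0..<n} = U" using reach[OF n3] by blast
      have "\<forall>z. (w@z \<in> Syn {0..<n} (deltaL n)) \<longleftrightarrow> acc n U z"
        by (simp only: Syn_append w) simp
      then show ?thesis by blast
    qed
  qed
  then obtain u where u: "\<forall>U\<in>X n. \<forall>z. (u U @ z \<in> Syn {0..<n} (deltaL n)) \<longleftrightarrow> acc n U z"
    using bchoice[OF word] by blast
  define \<phi> where "\<phi> U = delta_star t s (u U)" for U
  have "inj_on \<phi> (X n)"
  proof (rule inj_onI)
    fix U V assume UV: "U \<in> X n" "V \<in> X n" "\<phi> U = \<phi> V"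
    have "\<forall>z. acc n U z = acc n V z"
    proof
      fix z
      have "u U @ z \<in> dfa_lang s t F \<longleftrightarrow> u V @ z \<in> dfa_lang s t F"
        using UV(3) by (simp add: dfa_lang_def delta_star_def \<phi>_def)
      moreover have "u U @ z \<in> Syn {0..<n} (deltaL n) \<longleftrightarrow> acc n U z" using u UV(1) by blast
      moreover have "u V @ z \<in> Syn {0..<n} (deltaL n) \<longleftrightarrow> acc n V z" using u UV(2) by blast
      ultimately show "acc n U z = acc n V z" unfolding L by blast
    qed
    then show "U = V" using dist[OF n3] UV by blast
  qed
  moreover have "\<phi> ` X n \<subseteq> {0..<m}"
  proof
    fix k assume "k \<in> \<phi> ` X n"
    then obtain U where "k = \<phi> U" by blast
    moreover have "s < m" using dfa unfolding is_dfa_def by blast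
    ultimately show "k \<in> {0..<m}" using dstar_lt[OF dfa] unfolding \<phi>_def by simp
  qed
  ultimately show ?thesis using card_inj_on_le[of \<phi> "X n" "{0..<m}"] by simp
qed

theorem proposition3:
  fixes n :: nat
  assumes "n \<ge> 3"
  shows "sc (Syn {0..<n} (deltaL n)) = 2 ^ n - n"
proof -
  have "sc (Syn {0..<n} (deltaL n)) = card (X n)"
    unfolding sc_def
  proof (rule Least_equality)
    show "\<exists>s t F. is_dfa (card (X n)) s t F \<and> dfa_lang s t F = Syn {0..<n} (deltaL n)"
      by (rule upper[OF assms])
    show "\<And>m. \<exists>s t F. is_dfa m s t F \<and> dfa_lang s t F = Syn {0..<n} (deltaL n) \<Longrightarrow> card (X n) \<le> m"
      using lower[OF assms] by blast
  qed
  then show ?thesis using cardX by simp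
qed

end
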